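(* Let $\varPsi_{p,n}:=\varPsi_{p,n}(0)$ and $\vec\eta_{p,n}:=\vec e(\varPsi_{p,n})$ for $p\le n$. Then: (i) for all $p\le n$, $|\varPsi_{p,n}|=S^+_{p,n}$; (ii) for all $p<n<q$: almost surely on the event $\{\min_{h\in[p,q]}S_h=\min_{h\in[n,q]}S_h\}$ one has $\vec\eta_{p,q}=\vec\eta_{n,q}$; and almost surely on the event $\{\min_{h\in[p,n]}S_h=\min_{h\in[p,q]}S_h\}\cap\{S^+_{p,j}>0\ \forall j\in[n,q]\}$ one has $\vec\eta_{p,n}=\vec\eta_{p,q}$; (iii) with $T_{p,x}=\inf\{q\ge p:S_q-S_p=-|x|\}$, for all $p\le n$ and $x\in G_{\mathbb N}$, $$\varPsi_{p,n}(x)=(x+\vec e(x)S_{p,n})1_{\{n\le T_{p,x}\}}+\varPsi_{p,n}1_{\{n>T_{p,x}\}},$$ $$K_{p,n}(x)=E[\delta_{\varPsi_{p,n}(x)}\mid\sigma(S)]=\delta_{x+\vec e(x)S_{p,n}}1_{\{n\le T_{p,x}\}}+\sum_{i=1}^N\alpha_i\delta_{S^+_{p,n}\vec e_i}1_{\{n>T_{p,x}\}}.$$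
   Context: Fix $N\in\mathbb N^*$ and $\alpha_1,\dots,\alpha_N>0$ with $\sum_{i=1}^N\alpha_i=1$. $G$ is the graph consisting of $N$ half-lines $D_i=\{h\vec e_i:h\ge0\}$ emanating from $0$ ($\vec e_i$ distinct unit vectors), with metric $d(h\vec e_i,h'\vec e_j)=h+h'$ if $i\ne j$, $|h-h'|$ if $i=j$; $|x|:=d(x,0)$. Define $\vec e(z)=\vec e_i$ if $z\in D_i\setminus\{0\}$ and $\vec e(0)=\vec e_N$. $G_{\mathbb N}=\{x\in G:|x|\in\mathbb N\}$. $S=(S_n)_{n\in\mathbb Z}$ is a simple random walk on $\mathbb Z$ indexed by $\mathbb Z$ ($S_0=0$, $(S_n)_{n\ge0}$ and $(S_{-n})_{n\ge0}$ independent simple random walks), and $(\vec\eta_i)_{i\in\mathbb Z}$ is an i.i.d. sequence with law $\sum_i\alpha_i\delta_{\vec e_i}$, independent of $S$. For $p\le n$, $S_{p,n}=S_n-S_p$, $S^+_{p,n}=S_n-\min_{h\in[p,n]}S_h$. For $x\in G_{\mathbb N}$: $\varPsi_{p,p+1}(x)=x+\vec e(x)S_{p,p+1}$ if $x\ne0$, $\varPsi_{p,p+1}(0)=\vec\eta_pS^+_{p,p+1}$; $K_{p,p+1}(x)=\delta_{x+\vec e(x)S_{p,p+1}}$ if $x\ne0$, $K_{p,p+1}(0)=\sum_i\alpha_i\delta_{S^+_{p,p+1}\vec e_i}$. For $p<n$: $\varPsi_{p,n}=\varPsi_{n-1,n}\circ\cdots\circ\varPsi_{p,p+1}$, $K_{p,n}=K_{p,p+1}K_{p+1,p+2}\cdots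 K_{n-1,n}$ (with $KK'(x,A)=\sum_yK'(y,A)K(x,\{y\})$); $\varPsi_{p,p}(x)=x$, $K_{p,p}(x)=\delta_x$. *)

theory Defs
  imports "HOL-Probability.Probability"
begin

definition minS :: "(int \<Rightarrow> int) \<Rightarrow> int \<Rightarrow> int \<Rightarrow> int" where
  "minS S a b = Min (S ` {a..b})"

definition Splus :: "(int \<Rightarrow> int) \<Rightarrow> int \<Rightarrow> int \<Rightarrow> int" where
  "Splus S p n = S n - minS S p n"

definition GN :: "(nat \<Rightarrow> 'v::real_normed_vector) \<Rightarrow> nat \<Rightarrow> 'v set" where
  "GN e N = {real h *\<^sub>R e i | h i. i \<in> {1..N}}"

definition edir :: "(nat \<Rightarrow> 'v::real_normed_vector) \<Rightarrow> nat \<Rightarrow> 'v \<Rightarrow> 'v" where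
  "edir e N z = (if z = 0 then e N
                 else e (THE i. i \<in> {1..N} \<and> (\<exists>h>0. z = h *\<^sub>R e i)))"

definition Psi1 :: "(nat \<Rightarrow> 'v::real_normed_vector) \<Rightarrow> nat \<Rightarrow> (int \<Rightarrow> int) \<Rightarrow> (int \<Rightarrow> 'v)
    \<Rightarrow> int \<Rightarrow> 'v \<Rightarrow> 'v" where
  "Psi1 e N S eta p x =
     (if x = 0 then real_of_int (Splus S p (p + 1)) *\<^sub>R eta p
      else x + real_of_int (S (p + 1) - S p) *\<^sub>R edir e N x)"

fun psi_iter :: "(nat \<Rightarrow> 'v::real_normed_vector) \<Rightarrow> nat \<Rightarrow> (int \<Rightarrow> int) \<Rightarrow> (int \<Rightarrow> 'v)
    \<Rightarrow> int \<Rightarrow> nat \<Rightarrow> 'v \<Rightarrow> 'v" where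
  "psi_iter e N S eta p 0 x = x"
| "psi_iter e N S eta p (Suc k) x = Psi1 e N S eta (p + int k) (psi_iter e N S eta p k x)"

text \<open>Psi_{p,n} = Psi_{n-1,n} o ... o Psi_{p,p+1} (identity for n = p); meaningful for p <= n.\<close>
definition Psi :: "(nat \<Rightarrow> 'v::real_normed_vector) \<Rightarrow> nat \<Rightarrow> (int \<Rightarrow> int) \<Rightarrow> (int \<Rightarrow> 'v)
    \<Rightarrow> int \<Rightarrow> int \<Rightarrow> 'v \<Rightarrow> 'v" where
  "Psi e N S eta p n x = psi_iter e N S eta p (nat (n - p)) x"

definition alpha_pmf :: "(nat \<Rightarrow> 'v::real_normed_vector) \<Rightarrow> nat \<Rightarrow> (nat \<Rightarrow> real) \<Rightarrow> 'v pmf" where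
  "alpha_pmf e N \<alpha> = map_pmf e (embed_pmf (\<lambda>i. if i \<in> {1..N} then \<alpha> i else 0))"

definition K1 :: "(nat \<Rightarrow> 'v::real_normed_vector) \<Rightarrow> nat \<Rightarrow> (nat \<Rightarrow> real) \<Rightarrow> (int \<Rightarrow> int)
    \<Rightarrow> int \<Rightarrow> 'v \<Rightarrow> 'v pmf" where
  "K1 e N \<alpha> S p x =
     (if x = 0 then map_pmf (\<lambda>v. real_of_int (Splus S p (p + 1)) *\<^sub>R v) (alpha_pmf e N \<alpha>)
      else return_pmf (x + real_of_int (S (p + 1) - S p) *\<^sub>R edir e N x))"

text \<open>Kernel product: (K K')(x) = sum_y K(x,{y}) K'(y,.) = bind_pmf (K x) K'.\<close>
fun k_iter :: "(nat \<Rightarrow> 'v::real_normed_vector) \<Rightarrow> nat \<Rightarrow> (nat \<Rightarrow> real) \<Rightarrow> (int \<Rightarrow> int)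
    \<Rightarrow> int \<Rightarrow> nat \<Rightarrow> 'v \<Rightarrow> 'v pmf" where
  "k_iter e N \<alpha> S p 0 x = return_pmf x"
| "k_iter e N \<alpha> S p (Suc k) x = bind_pmf (k_iter e N \<alpha> S p k x) (K1 e N \<alpha> S (p + int k))"

definition Kker :: "(nat \<Rightarrow> 'v::real_normed_vector) \<Rightarrow> nat \<Rightarrow> (nat \<Rightarrow> real) \<Rightarrow> (int \<Rightarrow> int)
    \<Rightarrow> int \<Rightarrow> int \<Rightarrow> 'v \<Rightarrow> 'v pmf" where
  "Kker e N \<alpha> S p n x = k_iter e N \<alpha> S p (nat (n - p)) x"

text \<open>T_{p,x} = inf {q >= p : S_q - S_p = -r} with r = |x|, inf of the empty set = +infinity.\<close>
definition hit_time :: "(int \<Rightarrow> int) \<Rightarrow> int \<Rightarrow> real \<Rightarrow> ereal" where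
  "hit_time S p r = Inf ((\<lambda>q. ereal (real_of_int q)) ` {q. p \<le> q \<and> real_of_int (S q - S p) = - r})"

text \<open>sigma(X): sigma-algebra on the sample space generated by a whole process X indexed by the integers
  (each coordinate carrying the discrete sigma-algebra).\<close>
definition sigmaS :: "'w measure \<Rightarrow> ('w \<Rightarrow> int \<Rightarrow> 'b) \<Rightarrow> 'w measure" where
  "sigmaS M S = vimage_algebra (space M) S (PiM UNIV (\<lambda>_. count_space UNIV))"

end

theory Submission
  imports Defs
begin


lemma minS_le: "a \<le> m \<Longrightarrow> m \<le> b \<Longrightarrow> minS s a b \<le> s m"
  unfolding minS_def by (rule Min_le) auto

lemma minS_attained: "a \<le> b \<Longrightarrow> \<exists>m\<in>{a..b}. s m = minS s a b"
  unfolding minS_def using Min_in[of "s ` {a..b}"] by fastforce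

lemma minS_ge: "a \<le> b \<Longrightarrow> (\<And>m. a \<le> m \<Longrightarrow> m \<le> b \<Longrightarrow> c \<le> s m) \<Longrightarrow> c \<le> minS s a b"
  unfolding minS_def by (subst Min_ge_iff) auto

lemma minS_single[simp]: "minS s a a = s a"
  by (simp add: minS_def)

lemma minS_split:
  assumes "a \<le> b" "b \<le> c" shows "minS s a c = min (minS s a b) (minS s b c)"
proof (rule antisym)
  obtain m where m: "m \<in> {a..c}" "s m = minS s a c" using minS_attained[of a c s] assms by auto
  show "min (minS s a b) (minS s b c) \<le> minS s a c"
  proof (cases "m \<le> b")
    case True then show ?thesis using minS_le[of a m b s] m by auto
  next
    case False then show ?thesis using minS_le[of b m c s] m by auto
  qed
next
  show "minS s a c \<le> min (minS s a b) (minS s b c)"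
    using assms by (auto intro!: minS_ge minS_le)
qed

lemma minS_two: "minS s b (b+1) = min (s b) (s (b+1))"
proof -
  have "{b..b+1} = {b, b+1}" by auto
  then show ?thesis by (simp add: minS_def)
qed

lemma minS_Suc: "a \<le> b \<Longrightarrow> minS s a (b+1) = min (minS s a b) (s (b+1))"
  using minS_split[of a b "b+1" s] minS_two[of s b] minS_le[of a b b s] by auto

lemma Splus_step: "Splus s m (m+1) = max 0 (s (m+1) - s m)"
  by (simp add: Splus_def minS_two)

lemma Splus_nonneg: "a \<le> b \<Longrightarrow> Splus s a b \<ge> 0"
  using minS_le[of a b b s] by (simp add: Splus_def)

definition lastmin :: "(int \<Rightarrow> int) \<Rightarrow> int \<Rightarrow> int \<Rightarrow> int" where
  "lastmin s a b = Max {m\<in>{a..b}. s m = minS s a b}"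

lemma lastmin_in: "a \<le> b \<Longrightarrow> lastmin s a b \<in> {a..b} \<and> s (lastmin s a b) = minS s a b"
proof -
  assume "a \<le> b"
  then obtain m where "m \<in> {m\<in>{a..b}. s m = minS s a b}" using minS_attained[of a b s] by auto
  then have "Max {m\<in>{a..b}. s m = minS s a b} \<in> {m\<in>{a..b}. s m = minS s a b}"
    by (intro Max_in) (auto intro: finite_subset[of _ "{a..b}"])
  then show ?thesis unfolding lastmin_def by auto
qed

definition stepw :: "(int \<Rightarrow> int) \<Rightarrow> bool" where
  "stepw s \<longleftrightarrow> (\<forall>k. s (k+1) - s k = 1 \<or> s (k+1) - s k = -1)"

lemma Splus_Suc:
  assumes st: "stepw s" and pn: "a \<le> n"
  shows "Splus s a (n+1) = (if Splus s a n = 0 then max 0 (s (n+1) - s n) else Splus s a n + (s (n+1) - s n))"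
proof -
  have d: "s (n+1) - s n = 1 \<or> s (n+1) - s n = -1" using st by (simp add: stepw_def)
  have ms: "minS s a (n+1) = min (minS s a n) (s (n+1))" using minS_Suc pn by simp
  have mle: "minS s a n \<le> s n" using minS_le pn by simp
  show ?thesis using d ms mle by (auto simp: Splus_def)
qed

lemma minS_Suc_pos:
  assumes st: "stepw s" and pn: "a \<le> n" and "Splus s a n \<noteq> 0"
  shows "minS s a (n+1) = minS s a n"
proof -
  have d: "s (n+1) - s n = 1 \<or> s (n+1) - s n = -1" using st by (simp add: stepw_def)
  have ms: "minS s a (n+1) = min (minS s a n) (s (n+1))" using minS_Suc pn by simp
  have mle: "minS s a n \<le> s n" using minS_le pn by simp
  show ?thesis using d ms mle assms(3) by (auto simp: Splus_def)
qed

lemma psi_iter_add: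
  "psi_iter e N s et p (a + b) x = psi_iter e N s et (p + int a) b (psi_iter e N s et p a x)"
  by (induction b) (simp_all add: algebra_simps)

lemma k_iter_add:
  "k_iter e N \<alpha> s p (a + b) x = bind_pmf (k_iter e N \<alpha> s p a x) (k_iter e N \<alpha> s (p + int a) b)"
proof (induction b)
  case 0 then show ?case by (simp add: bind_return_pmf')
next
  case (Suc b) then show ?case by (simp add: bind_assoc_pmf algebra_simps)
qed

lemma hit_time_iff:
  assumes "h \<ge> 0"
  shows "ereal (real_of_int n) \<le> hit_time s p (real_of_int h) \<longleftrightarrow> (\<forall>q\<in>{p..<n}. s q - s p \<noteq> -h)"
proof -
  have "ereal (real_of_int n) \<le> hit_time s p (real_of_int h) \<longleftrightarrow>
        (\<forall>q. p \<le> q \<and> real_of_int (s q - s p) = - real_of_int h \<longrightarrow> n \<le> q)"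
    unfolding hit_time_def by (auto simp: le_Inf_iff)
  also have "\<dots> \<longleftrightarrow> (\<forall>q\<in>{p..<n}. s q - s p \<noteq> -h)"
  proof safe
    fix q assume A: "\<forall>q. p \<le> q \<and> real_of_int (s q - s p) = - real_of_int h \<longrightarrow> n \<le> q"
      and q: "q \<in> {p..<n}" "s q - s p = - h"
    then have "real_of_int (s q - s p) = - real_of_int h" by simp
    then show False using A q by force
  next
    fix q assume A: "\<forall>q\<in>{p..<n}. s q - s p \<noteq> - h" and q: "p \<le> q" "real_of_int (s q - s p) = - real_of_int h"
    then have "s q - s p = - h" by (metis of_int_eq_iff of_int_minus)
    then show "n \<le> q" using A q by force
  qed
  finally show ?thesis .
qed

locale star =
  fixes e :: "nat \<Rightarrow> 'v::real_normed_vector" and N :: nat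
  assumes inj: "inj_on e {1..N}" and nrm: "\<forall>i\<in>{1..N}. norm (e i) = 1"
begin

lemma edir_ray:
  assumes i: "i \<in> {1..N}" and h: "h > 0"
  shows "edir e N (h *\<^sub>R e i) = e i"
proof -
  have "e i \<noteq> 0" using nrm i by (metis norm_zero zero_neq_one)
  then have ne: "h *\<^sub>R e i \<noteq> 0" using h by auto
  have "(THE j. j \<in> {1..N} \<and> (\<exists>h'>0. h *\<^sub>R e i = h' *\<^sub>R e j)) = i"
  proof (rule the_equality)
    show "i \<in> {1..N} \<and> (\<exists>h'>0. h *\<^sub>R e i = h' *\<^sub>R e i)" using i h by auto
  next
    fix j assume j: "j \<in> {1..N} \<and> (\<exists>h'>0. h *\<^sub>R e i = h' *\<^sub>R e j)"
    then obtain h' where h': "h' > 0" "h *\<^sub>R e i = h' *\<^sub>R e j" by auto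
    have "norm (h *\<^sub>R e i) = h" using nrm i h by simp
    moreover have "norm (h' *\<^sub>R e j) = h'" using nrm j h' by simp
    ultimately have "h = h'" using h' by simp
    then have "e i = e j" using h' h by simp
    then show "j = i" using inj i j by (auto dest: inj_onD)
  qed
  then show ?thesis using ne by (simp add: edir_def)
qed

lemma Psi1_ray:
  assumes i: "i \<in> {1..N}" and h: "h > 0"
  shows "Psi1 e N s et m (h *\<^sub>R e i) = (h + real_of_int (s (m+1) - s m)) *\<^sub>R e i"
proof -
  have "e i \<noteq> 0" using nrm i by (metis norm_zero zero_neq_one)
  then have ne: "h *\<^sub>R e i \<noteq> 0" using h by auto
  show ?thesis using ne edir_ray[OF i h] by (simp add: Psi1_def scaleR_add_left)
qed

lemma K1_ray:
  assumes i: "i \<in> {1..N}" and h: "h > 0"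
  shows "K1 e N \<alpha> s m (h *\<^sub>R e i) = return_pmf ((h + real_of_int (s (m+1) - s m)) *\<^sub>R e i)"
proof -
  have "e i \<noteq> 0" using nrm i by (metis norm_zero zero_neq_one)
  then have ne: "h *\<^sub>R e i \<noteq> 0" using h by auto
  show ?thesis using ne edir_ray[OF i h] by (simp add: K1_def scaleR_add_left)
qed


lemma psi0:
  assumes st: "stepw s" and gd: "\<forall>k. et k \<in> e ` {1..N}"
  shows "psi_iter e N s et p k 0 = real_of_int (Splus s p (p + int k)) *\<^sub>R et (lastmin s p (p + int k))"
proof (induction k)
  case 0 show ?case by (simp add: Splus_def)
next
  case (Suc k)
  define n where "n = p + int k"
  have n1: "p + int (Suc k) = n + 1" by (simp add: n_def)
  have n1': "p + (1 + int k) = n + 1" by (simp add: n_def)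
  have pn: "p \<le> n" by (simp add: n_def)
  have IH: "psi_iter e N s et p k 0 = real_of_int (Splus s p n) *\<^sub>R et (lastmin s p n)"
    using Suc n_def by simp
  have d: "s (n+1) - s n = 1 \<or> s (n+1) - s n = -1" using st by (simp add: stepw_def)
  have ms: "minS s p (n+1) = min (minS s p n) (s (n+1))" using minS_Suc pn by simp
  have mle: "minS s p n \<le> s n" using minS_le pn by simp
  have sp: "Splus s p (n+1) = (if Splus s p n = 0 then max 0 (s (n+1) - s n) else Splus s p n + (s (n+1) - s n))"
    using Splus_Suc[OF st pn] .
  have "psi_iter e N s et p (Suc k) 0 = real_of_int (Splus s p (n+1)) *\<^sub>R et (lastmin s p (n+1))"
  proof (cases "Splus s p n = 0")
    case True
    then have mn: "minS s p n = s n" by (simp add: Splus_def)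
    have "psi_iter e N s et p (Suc k) 0 = Psi1 e N s et n 0" using IH True by (simp add: n_def)
    also have "\<dots> = real_of_int (max 0 (s (n+1) - s n)) *\<^sub>R et n" by (simp add: Psi1_def Splus_step)
    finally have L: "psi_iter e N s et p (Suc k) 0 = real_of_int (max 0 (s (n+1) - s n)) *\<^sub>R et n" .
    show ?thesis
    proof (cases "s (n+1) - s n = 1")
      case T1: True
      have "lastmin s p (n+1) = n"
        unfolding lastmin_def
      proof (rule Max_eqI)
        show "finite {m \<in> {p..n + 1}. s m = minS s p (n + 1)}"
          by (rule finite_subset[of _ "{p..n+1}"]) auto
        show "n \<in> {m \<in> {p..n + 1}. s m = minS s p (n + 1)}" using pn ms mn T1 by auto
        fix m assume "m \<in> {m \<in> {p..n + 1}. s m = minS s p (n + 1)}"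
        then show "m \<le> n" using ms mn T1 by (cases "m = n+1") auto
      qed
      then show ?thesis using L sp True T1 n1' by simp
    next
      case False then have "s(n+1) - s n = -1" using d by simp
      then show ?thesis using L sp True n1' by simp
    qed
  next
    case False
    then have hpos: "Splus s p n > 0" using Splus_nonneg[of p n s] pn by linarith
    obtain i where i: "i \<in> {1..N}" "et (lastmin s p n) = e i" using gd by blast
    have "psi_iter e N s et p (Suc k) 0 = Psi1 e N s et n (real_of_int (Splus s p n) *\<^sub>R e i)"
      using IH i by (simp add: n_def)
    also have "\<dots> = (real_of_int (Splus s p n) + real_of_int (s(n+1) - s n)) *\<^sub>R e i"
      using Psi1_ray[OF i(1)] hpos by simp
    finally have L: "psi_iter e N s et p (Suc k) 0 = (real_of_int (Splus s p n) + real_of_int (s(n+1) - s n)) *\<^sub>R e i" .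
    have ms2: "minS s p (n+1) = minS s p n" using minS_Suc_pos[OF st pn False] .
    have sp2: "Splus s p (n+1) = Splus s p n + (s (n+1) - s n)" using sp False by simp
    show ?thesis
    proof (cases "Splus s p (n+1) = 0")
      case True
      then have "real_of_int (Splus s p n) + real_of_int (s(n+1) - s n) = 0" using sp2
        by (metis of_int_add of_int_0)
      then show ?thesis using L True n1' by simp
    next
      case F2: False
      have "{m \<in> {p..n+1}. s m = minS s p (n+1)} = {m \<in> {p..n}. s m = minS s p n}"
        using ms2 F2 by (auto simp: Splus_def) (metis add_le_imp_le_right linorder_not_le order_antisym_conv zless_add1_eq)
      then have "lastmin s p (n+1) = lastmin s p n" unfolding lastmin_def using ms2 by simp
      then show ?thesis using L sp2 n1' i by simp
    qed
  qed
  then show ?case by (simp only: n1)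
qed

lemma Psi0:
  assumes st: "stepw s" and gd: "\<forall>k. et k \<in> e ` {1..N}" and pn: "p \<le> n"
  shows "Psi e N s et p n 0 = real_of_int (Splus s p n) *\<^sub>R et (lastmin s p n)"
  using psi0[OF st gd, of p "nat (n - p)"] pn by (simp add: Psi_def)

lemma edir_Psi0:
  assumes st: "stepw s" and gd: "\<forall>k. et k \<in> e ` {1..N}" and pn: "p \<le> n"
  shows "edir e N (Psi e N s et p n 0) = (if Splus s p n = 0 then e N else et (lastmin s p n))"
proof (cases "Splus s p n = 0")
  case True then show ?thesis using Psi0[OF assms] by (simp add: edir_def)
next
  case False
  then have hpos: "Splus s p n > 0" using Splus_nonneg[of p n s] pn by linarith
  obtain i where i: "i \<in> {1..N}" "et (lastmin s p n) = e i" using gd by blast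
  show ?thesis using Psi0[OF assms] edir_ray[OF i(1), of "real_of_int (Splus s p n)"] hpos i False by simp
qed

lemma norm_Psi0:
  assumes st: "stepw s" and gd: "\<forall>k. et k \<in> e ` {1..N}" and pn: "p \<le> n"
  shows "norm (Psi e N s et p n 0) = real_of_int (Splus s p n)"
proof -
  obtain i where i: "i \<in> {1..N}" "et (lastmin s p n) = e i" using gd by blast
  show ?thesis using Psi0[OF assms] i nrm Splus_nonneg[OF pn, of s] by simp
qed


lemma k0:
  assumes st: "stepw s" and sa: "set_pmf (alpha_pmf e N \<alpha>) \<subseteq> e ` {1..N}"
  shows "k_iter e N \<alpha> s p k 0 = map_pmf (\<lambda>v. real_of_int (Splus s p (p + int k)) *\<^sub>R v) (alpha_pmf e N \<alpha>)"
proof (induction k)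
  case 0 show ?case by (simp add: Splus_def map_pmf_const)
next
  case (Suc k)
  define n where "n = p + int k"
  have n1: "p + int (Suc k) = n + 1" by (simp add: n_def)
  have pn: "p \<le> n" by (simp add: n_def)
  define A where "A = alpha_pmf e N \<alpha>"
  have IH: "k_iter e N \<alpha> s p k 0 = map_pmf (\<lambda>v. real_of_int (Splus s p n) *\<^sub>R v) A"
    using Suc n_def A_def by simp
  have sp: "Splus s p (n+1) = (if Splus s p n = 0 then max 0 (s (n+1) - s n) else Splus s p n + (s (n+1) - s n))"
    using Splus_Suc[OF st pn] .
  have "k_iter e N \<alpha> s p (Suc k) 0 = bind_pmf A (\<lambda>v. K1 e N \<alpha> s n (real_of_int (Splus s p n) *\<^sub>R v))"
    using IH by (simp add: n_def bind_map_pmf)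
  also have "\<dots> = map_pmf (\<lambda>v. real_of_int (Splus s p (n+1)) *\<^sub>R v) A"
  proof (cases "Splus s p n = 0")
    case True
    then show ?thesis using sp by (simp add: K1_def Splus_step A_def bind_pmf_const)
  next
    case False
    then have hpos: "Splus s p n > 0" using Splus_nonneg[of p n s] pn by linarith
    have "bind_pmf A (\<lambda>v. K1 e N \<alpha> s n (real_of_int (Splus s p n) *\<^sub>R v))
        = bind_pmf A (\<lambda>v. return_pmf (real_of_int (Splus s p (n+1)) *\<^sub>R v))"
    proof (rule bind_pmf_cong)
      fix v assume "v \<in> set_pmf A"
      then obtain i where i: "i \<in> {1..N}" "v = e i" using sa A_def by blast
      show "K1 e N \<alpha> s n (real_of_int (Splus s p n) *\<^sub>R v) = return_pmf (real_of_int (Splus s p (n+1)) *\<^sub>R v)"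
        using K1_ray[OF i(1), of "real_of_int (Splus s p n)" \<alpha> s n] hpos i sp False by simp
    qed simp
    then show ?thesis by (simp add: map_pmf_def)
  qed
  finally show ?case using A_def by (simp only: n1)
qed

lemma psi_nohit:
  assumes st: "stepw s" and i: "i \<in> {1..N}" and h: "h \<ge> 1"
  shows "(\<forall>m\<in>{p..<p+int k}. s m - s p \<noteq> -h) \<Longrightarrow>
     psi_iter e N s et p k (real_of_int h *\<^sub>R e i) = real_of_int (h + s (p+int k) - s p) *\<^sub>R e i
   \<and> h + s (p + int k) - s p \<ge> 0
   \<and> k_iter e N \<alpha> s p k (real_of_int h *\<^sub>R e i) = return_pmf (real_of_int (h + s (p+int k) - s p) *\<^sub>R e i)"
proof (induction k)
  case 0 then show ?case using h by simp
next
  case (Suc k)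
  define n where "n = p + int k"
  have n1: "p + int (Suc k) = n + 1" by (simp add: n_def)
  have pn: "p \<le> n" by (simp add: n_def)
  have pre: "\<forall>m\<in>{p..<n+1}. s m - s p \<noteq> -h" using Suc.prems n1 by simp
  then have "\<forall>m\<in>{p..<p + int k}. s m - s p \<noteq> -h" by (auto simp: n_def)
  then have IH: "psi_iter e N s et p k (real_of_int h *\<^sub>R e i) = real_of_int (h + s n - s p) *\<^sub>R e i"
     "h + s n - s p \<ge> 0"
     "k_iter e N \<alpha> s p k (real_of_int h *\<^sub>R e i) = return_pmf (real_of_int (h + s n - s p) *\<^sub>R e i)"
    using Suc.IH n_def by auto
  have "s n - s p \<noteq> -h" using pre pn by auto
  then have cpos: "real_of_int (h + s n - s p) > 0" using IH(2) by simp
  have d: "s (n+1) - s n = 1 \<or> s (n+1) - s n = -1" using st by (simp add: stepw_def)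
  have eq: "real_of_int (h + s n - s p) + real_of_int (s (n+1) - s n) = real_of_int (h + s (n+1) - s p)"
    by simp
  have c1: "Psi1 e N s et n (real_of_int (h + s n - s p) *\<^sub>R e i) = real_of_int (h + s (n+1) - s p) *\<^sub>R e i"
    using Psi1_ray[OF i cpos, of s et n] unfolding eq .
  have c2: "K1 e N \<alpha> s n (real_of_int (h + s n - s p) *\<^sub>R e i) = return_pmf (real_of_int (h + s (n+1) - s p) *\<^sub>R e i)"
    using K1_ray[OF i cpos, of \<alpha> s n] unfolding eq .
  have s1: "psi_iter e N s et p (Suc k) (real_of_int h *\<^sub>R e i) = Psi1 e N s et n (psi_iter e N s et p k (real_of_int h *\<^sub>R e i))"
    by (simp add: n_def)
  have s2: "k_iter e N \<alpha> s p (Suc k) (real_of_int h *\<^sub>R e i) = bind_pmf (k_iter e N \<alpha> s p k (real_of_int h *\<^sub>R e i)) (K1 e N \<alpha> s n)"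
    by (simp add: n_def)
  have "h + s (n+1) - s p \<ge> 0" using d IH(2) cpos by auto
  then have "psi_iter e N s et p (Suc k) (real_of_int h *\<^sub>R e i) = real_of_int (h + s (n+1) - s p) *\<^sub>R e i
   \<and> h + s (n+1) - s p \<ge> 0
   \<and> k_iter e N \<alpha> s p (Suc k) (real_of_int h *\<^sub>R e i) = return_pmf (real_of_int (h + s (n+1) - s p) *\<^sub>R e i)"
    unfolding s1 s2 IH(1) IH(3) c1 bind_return_pmf c2 by simp
  then show ?case by (simp only: n1)
qed

lemma hit:
  assumes st: "stepw s" and gd: "\<forall>k. et k \<in> e ` {1..N}" and sa: "set_pmf (alpha_pmf e N \<alpha>) \<subseteq> e ` {1..N}"
    and i: "i \<in> {1..N}" and h: "h \<ge> 1" and pt: "p \<le> t" and tn: "t \<le> n"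
    and ht: "s t - s p = -h" and nh: "\<forall>m\<in>{p..<t}. s m - s p \<noteq> -h"
  shows "Psi e N s et p n (real_of_int h *\<^sub>R e i) = Psi e N s et p n 0
    \<and> Kker e N \<alpha> s p n (real_of_int h *\<^sub>R e i) = map_pmf (\<lambda>v. real_of_int (Splus s p n) *\<^sub>R v) (alpha_pmf e N \<alpha>)"
proof -
  define kt where "kt = nat (t - p)"
  define kn where "kn = nat (n - t)"
  have kt: "p + int kt = t" using pt by (simp add: kt_def)
  have knn: "nat (n - p) = kt + kn" using pt tn by (simp add: kt_def kn_def)
  have tkn: "t + int kn = n" using tn by (simp add: kn_def)
  let ?x = "real_of_int h *\<^sub>R e i"
  have A: "psi_iter e N s et p kt ?x = 0" "k_iter e N \<alpha> s p kt ?x = return_pmf 0"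
    using psi_nohit[OF st i h, of p kt et \<alpha>] nh kt ht by auto
  have mt: "minS s p t = s t"
  proof (rule antisym)
    show "minS s p t \<le> s t" using minS_le pt by simp
    show "s t \<le> minS s p t"
    proof (rule minS_ge[OF pt])
      fix m assume m: "p \<le> m" "m \<le> t"
      have "h + s (p + int (nat (m - p))) - s p \<ge> 0"
        using psi_nohit[OF st i h, of p "nat (m-p)" et \<alpha>] nh m by auto
      then show "s t \<le> s m" using m ht by simp
    qed
  qed
  then have "Splus s p t = 0" by (simp add: Splus_def)
  then have B: "psi_iter e N s et p kt 0 = 0" using psi0[OF st gd, of p kt] kt by simp
  have "Psi e N s et p n ?x = psi_iter e N s et t kn (psi_iter e N s et p kt ?x)"
    unfolding Psi_def knn psi_iter_add kt ..
  also have "\<dots> = psi_iter e N s et t kn (psi_iter e N s et p kt 0)" using A B by simp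
  also have "\<dots> = Psi e N s et p n 0"
    unfolding Psi_def knn psi_iter_add kt ..
  finally have P1: "Psi e N s et p n ?x = Psi e N s et p n 0" .
  have "Kker e N \<alpha> s p n ?x = bind_pmf (k_iter e N \<alpha> s p kt ?x) (k_iter e N \<alpha> s t kn)"
    unfolding Kker_def knn k_iter_add kt ..
  also have "\<dots> = k_iter e N \<alpha> s t kn 0" using A by (simp add: bind_return_pmf)
  also have "\<dots> = map_pmf (\<lambda>v. real_of_int (Splus s t n) *\<^sub>R v) (alpha_pmf e N \<alpha>)"
    using k0[OF st sa, of t kn] tkn by simp
  also have "Splus s t n = Splus s p n"
    using minS_split[OF pt tn, of s] mt minS_le[of t t n s] tn by (simp add: Splus_def)
  finally show ?thesis using P1 by simp
qed

lemma iii_path: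
  assumes st: "stepw s" and gd: "\<forall>k. et k \<in> e ` {1..N}" and sa: "set_pmf (alpha_pmf e N \<alpha>) \<subseteq> e ` {1..N}"
    and x: "x \<in> GN e N" and pn: "p \<le> n"
  shows "Psi e N s et p n x = (if ereal (real_of_int n) \<le> hit_time s p (norm x)
             then x + real_of_int (s n - s p) *\<^sub>R edir e N x else Psi e N s et p n 0)
    \<and> Kker e N \<alpha> s p n x = (if ereal (real_of_int n) \<le> hit_time s p (norm x)
             then return_pmf (x + real_of_int (s n - s p) *\<^sub>R edir e N x)
             else map_pmf (\<lambda>v. real_of_int (Splus s p n) *\<^sub>R v) (alpha_pmf e N \<alpha>))"
proof -
  obtain h' i where xi: "x = real h' *\<^sub>R e i" "i \<in> {1..N}" using x unfolding GN_def by blast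
  define h where "h = int h'"
  have xh: "x = real_of_int h *\<^sub>R e i" using xi h_def by simp
  have nx: "norm x = real_of_int h" using xi nrm h_def by simp
  have hi: "ereal (real_of_int n) \<le> hit_time s p (norm x) \<longleftrightarrow> (\<forall>q\<in>{p..<n}. s q - s p \<noteq> -h)"
    unfolding nx by (rule hit_time_iff) (simp add: h_def)
  show ?thesis
  proof (cases "h = 0")
    case True
    then have x0: "x = 0" using xh by simp
    show ?thesis
    proof (cases "n = p")
      case True
      then show ?thesis using x0 hi by (simp add: Psi_def Kker_def)
    next
      case False
      then have "\<not> (\<forall>q\<in>{p..<n}. s q - s p \<noteq> -h)" using pn \<open>h = 0\<close> by force
      then have "\<not> ereal (real_of_int n) \<le> hit_time s p (norm x)" using hi by blast
      then show ?thesis using x0 k0[OF st sa, of p "nat (n-p)"] pn by (simp add: Kker_def)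
    qed
  next
    case False
    then have h1: "h \<ge> 1" using h_def by simp
    have ed: "edir e N x = e i" using xh edir_ray[OF xi(2), of "real_of_int h"] h1 by simp
    show ?thesis
    proof (cases "\<forall>q\<in>{p..<n}. s q - s p \<noteq> -h")
      case True
      have pk: "p + int (nat (n - p)) = n" using pn by simp
      have "psi_iter e N s et p (nat (n-p)) x = real_of_int (h + s n - s p) *\<^sub>R e i
            \<and> k_iter e N \<alpha> s p (nat (n-p)) x = return_pmf (real_of_int (h + s n - s p) *\<^sub>R e i)"
        using psi_nohit[OF st xi(2) h1, of p "nat (n-p)" et \<alpha>] True pk xh by simp
      moreover have "real_of_int (h + s n - s p) *\<^sub>R e i = x + real_of_int (s n - s p) *\<^sub>R edir e N x"
        using xh ed by (simp add: scaleR_add_left[symmetric])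
      ultimately show ?thesis using hi True by (simp add: Psi_def Kker_def)
    next
      case False
      define Q where "Q = {q\<in>{p..<n}. s q - s p = -h}"
      have fQ: "finite Q" unfolding Q_def by (rule finite_subset[of _ "{p..<n}"]) auto
      have nQ: "Q \<noteq> {}" using False Q_def by auto
      define t where "t = Min Q"
      have tQ: "t \<in> Q" using Min_in[OF fQ nQ] t_def by simp
      have nh: "\<forall>m\<in>{p..<t}. s m - s p \<noteq> -h"
      proof (intro ballI notI)
        fix m assume m: "m \<in> {p..<t}" "s m - s p = -h"
        then have "m \<in> Q" using tQ unfolding Q_def by auto
        then have "t \<le> m" using Min_le[OF fQ] t_def by simp
        then show False using m by simp
      qed
      have "Psi e N s et p n x = Psi e N s et p n 0
        \<and> Kker e N \<alpha> s p n x = map_pmf (\<lambda>v. real_of_int (Splus s p n) *\<^sub>R v) (alpha_pmf e N \<alpha>)"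
        using hit[OF st gd sa xi(2) h1, of p t n] tQ nh xh unfolding Q_def by auto
      then show ?thesis using hi False by simp
    qed
  qed
qed


lemma ii_a:
  assumes st: "stepw s" and gd: "\<forall>k. et k \<in> e ` {1..N}"
    and pn: "p < n" and nq: "n < q" and mm: "minS s p q = minS s n q"
  shows "edir e N (Psi e N s et p q 0) = edir e N (Psi e N s et n q 0)"
proof -
  have sp: "Splus s p q = Splus s n q" using mm by (simp add: Splus_def)
  have fA: "finite {m\<in>{p..q}. s m = minS s p q}" by (rule finite_subset[of _ "{p..q}"]) auto
  have fB: "finite {m\<in>{n..q}. s m = minS s n q}" by (rule finite_subset[of _ "{n..q}"]) auto
  have ln: "lastmin s n q \<in> {n..q} \<and> s (lastmin s n q) = minS s n q" using lastmin_in nq by simp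
  have lp: "lastmin s p q \<in> {p..q} \<and> s (lastmin s p q) = minS s p q" using lastmin_in pn nq by simp
  have "lastmin s n q \<le> lastmin s p q"
    unfolding lastmin_def[of s p q] using ln mm pn by (intro Max_ge[OF fA]) auto
  moreover have "lastmin s p q \<le> lastmin s n q"
    unfolding lastmin_def[of s n q] using ln lp mm calculation by (intro Max_ge[OF fB]) auto
  ultimately have "lastmin s p q = lastmin s n q" by simp
  then show ?thesis using edir_Psi0[OF st gd] pn nq sp by simp
qed

lemma ii_b:
  assumes st: "stepw s" and gd: "\<forall>k. et k \<in> e ` {1..N}"
    and pn: "p < n" and nq: "n < q" and mm: "minS s p n = minS s p q"
    and pos: "\<forall>j\<in>{n..q}. Splus s p j > 0"
  shows "edir e N (Psi e N s et p n 0) = edir e N (Psi e N s et p q 0)"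
proof -
  have eq: "{m\<in>{p..q}. s m = minS s p q} = {m\<in>{p..n}. s m = minS s p n}"
  proof safe
    fix m assume m: "m \<in> {p..q}" "s m = minS s p q"
    show "m \<in> {p..n}"
    proof (rule ccontr)
      assume "m \<notin> {p..n}"
      then have mn: "n \<le> m" using m by auto
      have "minS s p q \<le> minS s p m"
        using m by (intro minS_ge) (auto intro: minS_le)
      moreover have "minS s p m \<le> s m" using m by (intro minS_le) auto
      ultimately have "Splus s p m = 0" using m by (simp add: Splus_def)
      then show False using pos mn m by force
    qed
  next
    fix m assume "m \<in> {p..n}" then show "m \<in> {p..q}" using nq by auto
  qed (simp_all add: mm)
  then have "lastmin s p q = lastmin s p n" unfolding lastmin_def by (simp add: mm)
  moreover have "Splus s p n \<noteq> 0" using pos nq by force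
  moreover have "q \<in> {n..q}" using nq by simp
  then have "Splus s p q \<noteq> 0" using pos by force
  ultimately show ?thesis using edir_Psi0[OF st gd] pn nq by simp
qed

end




lemma space_PiM_cs[simp]: "space (PiM UNIV (\<lambda>_::int. count_space (UNIV::'a set))) = UNIV"
  by (simp add: space_PiM PiE_def extensional_def Pi_def)

lemma comp_sets:
  "{f::int \<Rightarrow> 'a. f l \<in> C} \<in> sets (PiM UNIV (\<lambda>_::int. count_space (UNIV::'a set)))"
proof -
  have "(\<lambda>f. f l) -` C \<inter> space (PiM UNIV (\<lambda>_::int. count_space (UNIV::'a set)))
        \<in> sets (PiM UNIV (\<lambda>_::int. count_space (UNIV::'a set)))"
    by (rule measurable_sets[OF measurable_component_singleton]) auto
  then show ?thesis by (simp add: vimage_def)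
qed

lemma list_map_sets:
  "{s::int \<Rightarrow> int. map s xs = l} \<in> sets (PiM UNIV (\<lambda>_::int. count_space (UNIV::int set)))"
proof (induction xs arbitrary: l)
  case Nil
  show ?case
  proof (cases l)
    case Nil
    have "{s::int \<Rightarrow> int. map s [] = l} = space (PiM UNIV (\<lambda>_::int. count_space (UNIV::int set)))"
      using Nil by simp
    then show ?thesis by (metis sets.top)
  next
    case (Cons a list) then show ?thesis by simp
  qed
next
  case (Cons x xs)
  show ?case
  proof (cases l)
    case Nil then show ?thesis by simp
  next
    case (Cons y ys)
    have "{s::int \<Rightarrow> int. map s (x#xs) = l} = {s. s x \<in> {y}} \<inter> {s. map s xs = ys}" using Cons by auto
    then show ?thesis using Cons.IH[of ys] comp_sets[of x "{y}"] by (metis sets.Int)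
  qed
qed

lemma findep_sets:
  fixes P :: "(int \<Rightarrow> int) \<Rightarrow> bool"
  assumes dep: "\<And>s s'. (\<forall>k\<in>{a..b}. s k = s' k) \<Longrightarrow> P s = P s'"
  shows "{s. P s} \<in> sets (PiM UNIV (\<lambda>_::int. count_space (UNIV::int set)))"
proof -
  let ?L = "\<lambda>s::int\<Rightarrow>int. map s [a..b]"
  have "{s. P s} = (\<Union>l\<in>{l. \<exists>s. ?L s = l \<and> P s}. {s. ?L s = l})"
  proof (rule set_eqI, rule iffI)
    fix s assume "s \<in> (\<Union>l\<in>{l. \<exists>s. ?L s = l \<and> P s}. {s. ?L s = l})"
    then obtain s0 where "?L s = ?L s0" "P s0" by blast
    then have "\<forall>k\<in>{a..b}. s k = s0 k" by (simp add: map_eq_conv)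
    then show "s \<in> {s. P s}" using dep \<open>P s0\<close> by auto
  qed auto
  also have "\<dots> \<in> sets (PiM UNIV (\<lambda>_::int. count_space (UNIV::int set)))"
    by (intro sets.countable_UN' countableI_type) (auto intro: list_map_sets)
  finally show ?thesis .
qed

lemma alpha_facts:
  assumes apos: "\<forall>i\<in>{1..N}. \<alpha> i > 0" and asum: "(\<Sum>i=1..N. \<alpha> i) = 1"
  shows "set_pmf (alpha_pmf e N \<alpha>) \<subseteq> e ` {1..N}"
    and "measure_pmf.prob (alpha_pmf e N \<alpha>) C = (\<Sum>i\<in>{1..N}. \<alpha> i * indicator C (e i))"
proof -
  define f where "f = (\<lambda>i. if i \<in> {1..N} then \<alpha> i else 0)"
  have nn: "\<And>i. 0 \<le> f i" using apos by (auto simp: f_def less_imp_le)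
  have "(\<integral>\<^sup>+i. ennreal (f i) \<partial>count_space UNIV) = (\<Sum>i\<in>{1..N}. ennreal (f i))"
    by (rule nn_integral_count_space') (auto simp: f_def)
  also have "\<dots> = ennreal (\<Sum>i\<in>{1..N}. f i)" using nn by (simp add: sum_ennreal)
  also have "(\<Sum>i\<in>{1..N}. f i) = 1" using asum by (simp add: f_def)
  finally have int1: "(\<integral>\<^sup>+i. ennreal (f i) \<partial>count_space UNIV) = 1" by simp
  define Q where "Q = embed_pmf f"
  have pQ: "\<And>i. pmf Q i = f i" unfolding Q_def by (rule pmf_embed_pmf[OF nn int1])
  have sQ: "set_pmf Q = {1..N}" unfolding Q_def using apos
    by (subst set_embed_pmf[OF nn int1]) (auto simp: f_def)
  have al: "alpha_pmf e N \<alpha> = map_pmf e Q" by (simp add: alpha_pmf_def Q_def f_def)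
  show "set_pmf (alpha_pmf e N \<alpha>) \<subseteq> e ` {1..N}" using al sQ by simp
  have "measure_pmf.prob (alpha_pmf e N \<alpha>) C = measure_pmf.prob Q (e -` C)" using al by simp
  also have "\<dots> = measure_pmf.prob Q (e -` C \<inter> set_pmf Q)" by (simp add: measure_Int_set_pmf)
  also have "\<dots> = (\<Sum>i\<in>e -` C \<inter> {1..N}. f i)" using sQ pQ by (simp add: measure_measure_pmf_finite)
  also have "\<dots> = (\<Sum>i\<in>{1..N} \<inter> e -` C. \<alpha> i)" by (subst Int_commute) (rule sum.cong, auto simp: f_def)
  also have "\<dots> = (\<Sum>i\<in>{1..N}. \<alpha> i * indicator C (e i))"
  proof -
    have "(\<Sum>i\<in>{1..N}. \<alpha> i * indicator C (e i)) = (\<Sum>i\<in>{1..N}. if i \<in> e -` C then \<alpha> i else 0)"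
      by (rule sum.cong) (auto simp: indicator_def)
    then show ?thesis using sum.inter_restrict[of "{1..N}" \<alpha> "e -` C"] by simp
  qed
  finally show "measure_pmf.prob (alpha_pmf e N \<alpha>) C = (\<Sum>i\<in>{1..N}. \<alpha> i * indicator C (e i))" .
qed

lemma stepw_bound:
  assumes "stepw s" shows "s (m + int k) - s m \<le> int k"
proof (induction k)
  case (Suc k)
  have e1: "m + int (Suc k) = m + int k + 1" by simp
  have "s (m + int (Suc k)) - s (m + int k) \<le> 1" unfolding e1 using assms by (auto simp: stepw_def dest: spec[of _ "m + int k"])
  then show ?case using Suc by simp
qed simp

lemma Splus_le:
  assumes "stepw s" "p \<le> n" shows "Splus s p n \<le> n - p"
proof -
  obtain m where m: "m \<in> {p..n}" "s m = minS s p n" using minS_attained assms(2) by blast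
  have "s (m + int (nat (n - m))) - s m \<le> int (nat (n - m))" by (rule stepw_bound[OF assms(1)])
  then show ?thesis using m by (simp add: Splus_def)
qed


locale setting = prob_space M for M :: "'w measure" +
  fixes S :: "'w \<Rightarrow> int \<Rightarrow> int" and eta :: "'w \<Rightarrow> int \<Rightarrow> 'v::real_normed_vector"
    and e :: "nat \<Rightarrow> 'v" and N :: nat and \<alpha> :: "nat \<Rightarrow> real"
  assumes apos: "\<forall>i\<in>{1..N}. \<alpha> i > 0" and asum: "(\<Sum>i=1..N. \<alpha> i) = 1"
    and injE: "inj_on e {1..N}" and nrmE: "\<forall>i\<in>{1..N}. norm (e i) = 1"
    and indS: "indep_vars (\<lambda>_. count_space UNIV) (\<lambda>k \<omega>. S \<omega> (k + 1) - S \<omega> k) UNIV"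
    and lawS: "\<forall>k. measure M {\<omega>\<in>space M. S \<omega> (k + 1) - S \<omega> k = 1} = 1/2
           \<and> measure M {\<omega>\<in>space M. S \<omega> (k + 1) - S \<omega> k = -1} = 1/2"
    and indE: "indep_vars (\<lambda>_. count_space UNIV) (\<lambda>k \<omega>. eta \<omega> k) UNIV"
    and lawE: "\<forall>k. \<forall>i\<in>{1..N}. measure M {\<omega>\<in>space M. eta \<omega> k = e i} = \<alpha> i"
    and indSE: "indep_set (sets (sigmaS M S)) (sets (sigmaS M eta))"

sublocale setting \<subseteq> star e N using injE nrmE by unfold_locales

context setting
begin

lemma rv_set: "random_variable (count_space UNIV) X \<Longrightarrow> {\<omega>\<in>space M. P (X \<omega>)} \<in> events"
proof -
  assume X: "random_variable (count_space UNIV) X"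
  have "X -` {x. P x} \<inter> space M \<in> events" by (rule measurable_sets[OF X]) simp
  moreover have "X -` {x. P x} \<inter> space M = {\<omega>\<in>space M. P (X \<omega>)}" by auto
  ultimately show ?thesis by simp
qed

lemma incr_rv: "random_variable (count_space UNIV) (\<lambda>\<omega>. S \<omega> (k+1) - S \<omega> k)"
  using indS unfolding indep_vars_def2 by auto

lemma eta_rv: "random_variable (count_space UNIV) (\<lambda>\<omega>. eta \<omega> k)"
  using indE unfolding indep_vars_def2 by auto

lemma AE_step: "AE \<omega> in M. stepw (S \<omega>)"
  unfolding stepw_def
proof (subst AE_all_countable, intro allI)
  fix k
  let ?A = "{\<omega>\<in>space M. S \<omega> (k+1) - S \<omega> k = 1}"
  let ?B = "{\<omega>\<in>space M. S \<omega> (k+1) - S \<omega> k = -1}"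
  have A: "?A \<in> events" and B: "?B \<in> events" using rv_set[OF incr_rv] by auto
  have "prob (?A \<union> ?B) = prob ?A + prob ?B" by (rule finite_measure_Union[OF A B]) auto
  then have "prob (?A \<union> ?B) = 1" using lawS by simp
  then have "AE \<omega> in M. \<omega> \<in> ?A \<union> ?B" by (rule AE_prob_1)
  then show "AE \<omega> in M. S \<omega> (k+1) - S \<omega> k = 1 \<or> S \<omega> (k+1) - S \<omega> k = -1"
    by (rule AE_mp) (rule AE_I2, auto)
qed

lemma Xe_ev: "{\<omega>\<in>space M. eta \<omega> k \<in> C} \<in> events"
  using rv_set[OF eta_rv] by auto

lemma Xe_union:
  "prob (\<Union>i\<in>{1..N}. {\<omega>\<in>space M. eta \<omega> k = e i} \<inter> Y) = (\<Sum>i\<in>{1..N}. prob ({\<omega>\<in>space M. eta \<omega> k = e i} \<inter> Y))"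
  if "Y \<in> events" for Y
proof (rule finite_measure_finite_Union)
  show "(\<lambda>i. {\<omega> \<in> space M. eta \<omega> k = e i} \<inter> Y) ` {1..N} \<subseteq> events"
    using Xe_ev[of k "{_}"] that by auto
  show "disjoint_family_on (\<lambda>i. {\<omega> \<in> space M. eta \<omega> k = e i} \<inter> Y) {1..N}"
    unfolding disjoint_family_on_def using injE by auto (metis One_nat_def atLeastAtMost_iff inj_onD)
qed simp

lemma AE_eta: "AE \<omega> in M. \<forall>k. eta \<omega> k \<in> e ` {1..N}"
proof (subst AE_all_countable, intro allI)
  fix k
  have "prob (\<Union>i\<in>{1..N}. {\<omega>\<in>space M. eta \<omega> k = e i} \<inter> space M) = (\<Sum>i\<in>{1..N}. \<alpha> i)"
    using Xe_union[of "space M" k] lawE by (simp add: Int_absorb2)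
  then have "prob (\<Union>i\<in>{1..N}. {\<omega>\<in>space M. eta \<omega> k = e i} \<inter> space M) = 1" using asum by simp
  then have "AE \<omega> in M. \<omega> \<in> (\<Union>i\<in>{1..N}. {\<omega>\<in>space M. eta \<omega> k = e i} \<inter> space M)" by (rule AE_prob_1)
  then show "AE \<omega> in M. eta \<omega> k \<in> e ` {1..N}" by (rule AE_mp) (rule AE_I2, auto)
qed

lemma eta_law: "prob {\<omega>\<in>space M. eta \<omega> l \<in> C} = (\<Sum>i\<in>{1..N}. \<alpha> i * indicator C (e i))"
proof -
  let ?H = "{\<omega>\<in>space M. eta \<omega> l \<in> C}"
  have "prob ?H = prob (\<Union>i\<in>{1..N}. {\<omega>\<in>space M. eta \<omega> l = e i} \<inter> ?H)"
  proof (rule measure_eq_AE)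
    show "AE x in M. (x \<in> ?H) = (x \<in> (\<Union>i\<in>{1..N}. {\<omega>\<in>space M. eta \<omega> l = e i} \<inter> ?H))"
      using AE_eta by (rule AE_mp) (rule AE_I2, auto)
    show "?H \<in> events" by (rule Xe_ev)
    show "(\<Union>i\<in>{1..N}. {\<omega>\<in>space M. eta \<omega> l = e i} \<inter> ?H) \<in> events"
      using Xe_ev[of l "{_}"] Xe_ev[of l C] by (intro sets.finite_UN) auto
  qed
  also have "\<dots> = (\<Sum>i\<in>{1..N}. prob ({\<omega>\<in>space M. eta \<omega> l = e i} \<inter> ?H))"
    by (rule Xe_union) (rule Xe_ev)
  also have "\<dots> = (\<Sum>i\<in>{1..N}. \<alpha> i * indicator C (e i))"
  proof (rule sum.cong)
    fix i assume i: "i \<in> {1..N}"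
    show "prob ({\<omega>\<in>space M. eta \<omega> l = e i} \<inter> ?H) = \<alpha> i * indicator C (e i)"
    proof (cases "e i \<in> C")
      case True
      then have "{\<omega>\<in>space M. eta \<omega> l = e i} \<inter> ?H = {\<omega>\<in>space M. eta \<omega> l = e i}" by auto
      then show ?thesis using lawE i True by simp
    next
      case False
      then have "{\<omega>\<in>space M. eta \<omega> l = e i} \<inter> ?H = {}" by auto
      then show ?thesis using False by simp
    qed
  qed simp
  finally show ?thesis .
qed

lemma Fset:
  assumes dep: "\<And>s s'. (\<forall>k\<in>{a..b}. s k = s' k) \<Longrightarrow> P s = P s'"
  shows "{\<omega>\<in>space M. P (S \<omega>)} \<in> sets (sigmaS M S)"
proof -
  have "S -` {s. P s} \<inter> space M \<in> sets (sigmaS M S)"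
    unfolding sigmaS_def by (rule in_vimage_algebra) (rule findep_sets[OF dep])
  moreover have "S -` {s. P s} \<inter> space M = {\<omega>\<in>space M. P (S \<omega>)}" by auto
  ultimately show ?thesis by simp
qed

lemma Hset: "{\<omega>\<in>space M. eta \<omega> l \<in> C} \<in> sets (sigmaS M eta)"
proof -
  have "eta -` {f. f l \<in> C} \<inter> space M \<in> sets (sigmaS M eta)"
    unfolding sigmaS_def by (rule in_vimage_algebra) (rule comp_sets)
  moreover have "eta -` {f. f l \<in> C} \<inter> space M = {\<omega>\<in>space M. eta \<omega> l \<in> C}" by auto
  ultimately show ?thesis by simp
qed

lemma Fsub: "sets (sigmaS M S) \<subseteq> events"
  using indep_setD_ev1[OF indSE] .

lemma sfsub: "sigma_finite_subalgebra M (sigmaS M S)"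
proof -
  have sub: "subalgebra M (sigmaS M S)" unfolding subalgebra_def using Fsub by (simp add: sigmaS_def)
  interpret fms: finite_measure_subalgebra M "sigmaS M S" by unfold_locales (rule sub)
  show ?thesis by (rule fms.sigma_finite_subalgebra_axioms)
qed

lemma comb:
  fixes D :: "'w \<Rightarrow> int" and \<phi> :: "'a \<Rightarrow> int \<Rightarrow> 'b"
  assumes X: "random_variable (count_space UNIV) X" and D: "random_variable (count_space UNIV) D"
  shows "random_variable (count_space UNIV) (\<lambda>\<omega>. \<phi> (X \<omega>) (D \<omega>))"
proof (rule measurableI)
  fix A :: "'b set" assume "A \<in> sets (count_space UNIV)"
  have "(\<lambda>\<omega>. \<phi> (X \<omega>) (D \<omega>)) -` A \<inter> space M
      = (\<Union>d\<in>UNIV. {\<omega>\<in>space M. D \<omega> = d} \<inter> {\<omega>\<in>space M. \<phi> (X \<omega>) d \<in> A})" by blast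
  also have "\<dots> \<in> events"
  proof (rule sets.countable_UN')
    show "countable (UNIV :: int set)" by simp
    have "\<And>d. {\<omega>\<in>space M. D \<omega> = d} \<inter> {\<omega>\<in>space M. \<phi> (X \<omega>) d \<in> A} \<in> events"
      by (rule sets.Int[OF rv_set[OF D, of "\<lambda>v. v = d" for d] rv_set[OF X, of "\<lambda>v. \<phi> v d \<in> A" for d]])
    then show "(\<lambda>d. {\<omega>\<in>space M. D \<omega> = d} \<inter> {\<omega>\<in>space M. \<phi> (X \<omega>) d \<in> A}) ` UNIV \<subseteq> events"
      by blast
  qed
  finally show "(\<lambda>\<omega>. \<phi> (X \<omega>) (D \<omega>)) -` A \<inter> space M \<in> events" .
qed simp

lemma psi_rv: "random_variable (count_space UNIV) (\<lambda>\<omega>. psi_iter e N (S \<omega>) (eta \<omega>) p k x)"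
proof (induction k)
  case 0 then show ?case by simp
next
  case (Suc k)
  define m where "m = p + int k"
  define Y where "Y = (\<lambda>\<omega>. psi_iter e N (S \<omega>) (eta \<omega>) p k x)"
  have eq: "(\<lambda>\<omega>. psi_iter e N (S \<omega>) (eta \<omega>) p (Suc k) x)
    = (\<lambda>\<omega>. if Y \<omega> = 0 then (\<lambda>v d. real_of_int (max 0 d) *\<^sub>R v) (eta \<omega> m) (S \<omega> (m+1) - S \<omega> m)
           else (\<lambda>y d. y + real_of_int d *\<^sub>R edir e N y) (Y \<omega>) (S \<omega> (m+1) - S \<omega> m))"
    by (auto simp: Psi1_def Splus_step fun_eq_iff Y_def m_def)
  have Y: "random_variable (count_space UNIV) Y" using Suc by (simp add: Y_def)
  show ?case unfolding eq
    by (rule measurable_If[OF comb[OF eta_rv incr_rv] comb[OF Y incr_rv] rv_set[OF Y]])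
qed

lemma ind_int: "X \<in> events \<Longrightarrow> integrable M (indicator X :: 'w \<Rightarrow> real)"
  by (simp add: emeasure_eq_measure)


lemma iv_a:
  assumes x: "x \<in> GN e N" and pn: "p \<le> n"
  shows "AE \<omega> in M. real_cond_exp M (sigmaS M S) (\<lambda>\<omega>. indicator A (Psi e N (S \<omega>) (eta \<omega>) p n x)) \<omega>
              = measure_pmf.prob (Kker e N \<alpha> (S \<omega>) p n x) A"
proof -
  interpret sfs: sigma_finite_subalgebra M "sigmaS M S" by (rule sfsub)
  have sa: "set_pmf (alpha_pmf e N \<alpha>) \<subseteq> e ` {1..N}" using alpha_facts(1)[OF apos asum] .
  have ap: "\<And>C. measure_pmf.prob (alpha_pmf e N \<alpha>) C = (\<Sum>i\<in>{1..N}. \<alpha> i * indicator C (e i))"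
    using alpha_facts(2)[OF apos asum] .
  obtain h' i where xi: "x = real h' *\<^sub>R e i" "i \<in> {1..N}" using x unfolding GN_def by blast
  define hx where "hx = int h'"
  have nx: "norm x = real_of_int hx" using xi nrmE hx_def by simp
  define hitf where "hitf = (\<lambda>s::int\<Rightarrow>int. \<exists>q\<in>{p..<n}. s q - s p = -hx)"
  define yv where "yv = (\<lambda>s::int\<Rightarrow>int. x + real_of_int (s n - s p) *\<^sub>R edir e N x)"
  define cl where "cl = (\<lambda>s::int\<Rightarrow>int. (Splus s p n, lastmin s p n))"
  define I where "I = {0..n-p} \<times> {p..n}"
  define D0 where "D0 = {\<omega>\<in>space M. \<not> hitf (S \<omega>) \<and> yv (S \<omega>) \<in> A}"
  define E where "E = (\<lambda>j. {\<omega>\<in>space M. hitf (S \<omega>) \<and> cl (S \<omega>) = j})"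
  define H where "H = (\<lambda>j::int\<times>int. {\<omega>\<in>space M. eta \<omega> (snd j) \<in> {v. real_of_int (fst j) *\<^sub>R v \<in> A}})"
  define w where "w = (\<lambda>j::int\<times>int. \<Sum>i\<in>{1..N}. \<alpha> i * indicator A (real_of_int (fst j) *\<^sub>R e i))"
  define f where "f = (\<lambda>\<omega>. indicator A (Psi e N (S \<omega>) (eta \<omega>) p n x) :: real)"
  define g where "g = (\<lambda>\<omega>. indicator D0 \<omega> + (\<Sum>j\<in>I. indicator (E j) \<omega> * w j) :: real)"
  define f' where "f' = (\<lambda>\<omega>. indicator D0 \<omega> + (\<Sum>j\<in>I. indicator (E j \<inter> H j) \<omega>) :: real)"
  have finI: "finite I" by (simp add: I_def)
  have hi: "\<And>s. ereal (real_of_int n) \<le> hit_time s p (norm x) \<longleftrightarrow> \<not> hitf s"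
    unfolding nx hitf_def by (subst hit_time_iff) (auto simp: hx_def)
  have dep: "hitf s = hitf s' \<and> yv s = yv s' \<and> cl s = cl s'" if ag: "\<forall>k\<in>{p..n}. s k = s' k" for s s'
  proof -
    have im: "s ` {p..n} = s' ` {p..n}" using ag by (intro image_cong) auto
    have m: "minS s p n = minS s' p n" unfolding minS_def im ..
    have st: "{m\<in>{p..n}. s m = minS s p n} = {m\<in>{p..n}. s' m = minS s' p n}" using ag m by auto
    have "hitf s = hitf s'" unfolding hitf_def using ag by auto
    moreover have "yv s = yv s'" unfolding yv_def using ag pn by auto
    moreover have "cl s = cl s'" unfolding cl_def Splus_def lastmin_def st using ag pn m by auto
    ultimately show ?thesis by simp
  qed
  have D0F: "D0 \<in> sets (sigmaS M S)"
  proof -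
    have "{\<omega>\<in>space M. (\<lambda>s. \<not> hitf s \<and> yv s \<in> A) (S \<omega>)} \<in> sets (sigmaS M S)"
      by (rule Fset[of p n]) (metis dep)
    then show ?thesis by (simp add: D0_def)
  qed
  have EF: "E j \<in> sets (sigmaS M S)" for j
  proof -
    have "{\<omega>\<in>space M. (\<lambda>s. hitf s \<and> cl s = j) (S \<omega>)} \<in> sets (sigmaS M S)"
      by (rule Fset[of p n]) (metis dep)
    then show ?thesis by (simp add: E_def)
  qed
  have HG: "H j \<in> sets (sigmaS M eta)" for j unfolding H_def by (rule Hset)
  have D0ev: "D0 \<in> events" using D0F Fsub by auto
  have Eev: "E j \<in> events" for j using EF[of j] Fsub by blast
  have Hev: "H j \<in> events" for j unfolding H_def by (rule Xe_ev)
  have good: "AE \<omega> in M. stepw (S \<omega>) \<and> (\<forall>k. eta \<omega> k \<in> e ` {1..N})"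
    using AE_step AE_eta by (rule AE_mp[OF _ AE_mp]) (rule AE_I2, auto)
  have ptw: "f \<omega> = f' \<omega> \<and> measure_pmf.prob (Kker e N \<alpha> (S \<omega>) p n x) A = g \<omega>"
    if om: "\<omega> \<in> space M" and st: "stepw (S \<omega>)" and gd: "\<forall>k. eta \<omega> k \<in> e ` {1..N}" for \<omega>
  proof -
    note ip = iii_path[OF st gd sa x pn]
    show ?thesis
    proof (cases "hitf (S \<omega>)")
      case False
      have E0: "\<And>j. \<omega> \<notin> E j" using False by (simp add: E_def)
      have "f \<omega> = indicator A (yv (S \<omega>))" using ip hi[of "S \<omega>"] False by (simp add: f_def yv_def)
      moreover have "f' \<omega> = indicator A (yv (S \<omega>))" using E0 om False by (simp add: f'_def D0_def indicator_def)
      moreover have "measure_pmf.prob (Kker e N \<alpha> (S \<omega>) p n x) A = indicator A (yv (S \<omega>))"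
        using ip hi[of "S \<omega>"] False by (simp add: yv_def)
      moreover have "g \<omega> = indicator A (yv (S \<omega>))" using E0 om False by (simp add: g_def D0_def indicator_def)
      ultimately show ?thesis by simp
    next
      case True
      define c where "c = Splus (S \<omega>) p n"
      define L where "L = lastmin (S \<omega>) p n"
      have clI: "cl (S \<omega>) \<in> I"
        using Splus_le[OF st pn] Splus_nonneg[OF pn, of "S \<omega>"] lastmin_in[OF pn, of "S \<omega>"]
        by (simp add: cl_def I_def)
      have Ej: "\<And>j. indicator (E j) \<omega> = (if cl (S \<omega>) = j then 1 else (0::real))"
        using om True by (auto simp: E_def indicator_def)
      have D00: "indicator D0 \<omega> = (0::real)" using True by (simp add: D0_def indicator_def)
      have "f \<omega> = indicator A (real_of_int c *\<^sub>R eta \<omega> L)"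
        using ip hi[of "S \<omega>"] True Psi0[OF st gd pn] by (simp add: f_def c_def L_def)
      moreover have "f' \<omega> = indicator (H (cl (S \<omega>))) \<omega>"
      proof -
        have "(\<Sum>j\<in>I. indicator (E j \<inter> H j) \<omega>) = (\<Sum>j\<in>I. if cl (S \<omega>) = j then indicator (H j) \<omega> else (0::real))"
          by (rule sum.cong) (auto simp: indicator_inter_arith Ej)
        then show ?thesis using finI clI D00 by (simp add: f'_def)
      qed
      moreover have "indicator (H (cl (S \<omega>))) \<omega> = (indicator A (real_of_int c *\<^sub>R eta \<omega> L) :: real)"
        using om by (simp add: H_def cl_def c_def L_def indicator_def)
      moreover have "measure_pmf.prob (Kker e N \<alpha> (S \<omega>) p n x) A = w (cl (S \<omega>))"
        using ip hi[of "S \<omega>"] True by (simp add: w_def cl_def ap indicator_vimage)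
      moreover have "g \<omega> = w (cl (S \<omega>))"
      proof -
        have "(\<Sum>j\<in>I. indicator (E j) \<omega> * w j) = (\<Sum>j\<in>I. if cl (S \<omega>) = j then w j else 0)"
          by (rule sum.cong) (auto simp: Ej)
        then show ?thesis using finI clI D00 by (simp add: g_def)
      qed
      ultimately show ?thesis by simp
    qed
  qed
  have AEf: "AE \<omega> in M. f \<omega> = f' \<omega>"
    using good by (rule AE_mp) (rule AE_I2, use ptw in blast)
  have AEg: "AE \<omega> in M. measure_pmf.prob (Kker e N \<alpha> (S \<omega>) p n x) A = g \<omega>"
    using good by (rule AE_mp) (rule AE_I2, use ptw in blast)
  have fmeas: "f \<in> borel_measurable M"
    unfolding f_def Psi_def by (rule measurable_compose[OF psi_rv]) simp
  have gF: "g \<in> borel_measurable (sigmaS M S)"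
    unfolding g_def using D0F EF
    by (intro borel_measurable_add borel_measurable_sum borel_measurable_times borel_measurable_indicator borel_measurable_const) auto
  have gmeas: "g \<in> borel_measurable M" by (rule measurable_from_subalg[OF sfs.subalg gF])
  have f'meas: "f' \<in> borel_measurable M"
    unfolding f'_def using D0ev Eev Hev
    by (intro borel_measurable_add borel_measurable_sum borel_measurable_indicator sets.Int) auto
  have intg: "integrable M g" unfolding g_def
    by (intro Bochner_Integration.integrable_add Bochner_Integration.integrable_sum integrable_mult_left ind_int D0ev Eev)
  have intf': "integrable M f'" unfolding f'_def
    by (intro Bochner_Integration.integrable_add Bochner_Integration.integrable_sum ind_int D0ev Eev Hev sets.Int)
  have intf: "integrable M f" using intf' integrable_cong_AE[OF fmeas f'meas AEf] by simp
  have "AE \<omega> in M. real_cond_exp M (sigmaS M S) f \<omega> = g \<omega>"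
  proof (rule sfs.real_cond_exp_charact[OF _ intf intg gF])
    fix B assume BF: "B \<in> sets (sigmaS M S)"
    have Bev: "B \<in> events" using BF Fsub by auto
    have K3: "measure M (B \<inter> (E j \<inter> H j)) = measure M (B \<inter> E j) * w j" for j
    proof -
      have "measure M (B \<inter> (E j \<inter> H j)) = prob ((B \<inter> E j) \<inter> H j)" by (simp add: Int_assoc)
      also have "\<dots> = prob (B \<inter> E j) * prob (H j)"
        using BF EF HG by (intro indep_setD[OF indSE]) auto
      also have "prob (H j) = w j" unfolding H_def w_def eta_law by (simp add: indicator_def)
      finally show ?thesis .
    qed
    have "(\<integral>\<omega>\<in>B. f \<omega> \<partial>M) = (\<integral>\<omega>. indicator B \<omega> * f \<omega> \<partial>M)"
      by (simp add: set_lebesgue_integral_def)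
    also have "\<dots> = (\<integral>\<omega>. indicator (B \<inter> D0) \<omega> + (\<Sum>j\<in>I. indicator (B \<inter> (E j \<inter> H j)) \<omega>) \<partial>M)"
    proof (rule integral_cong_AE)
      show "(\<lambda>\<omega>. indicator B \<omega> * f \<omega>) \<in> borel_measurable M" using Bev fmeas by simp
      show "(\<lambda>\<omega>. indicator (B \<inter> D0) \<omega> + (\<Sum>j\<in>I. indicator (B \<inter> (E j \<inter> H j)) \<omega>) :: real) \<in> borel_measurable M"
        using Bev D0ev Eev Hev by (intro borel_measurable_add borel_measurable_sum borel_measurable_indicator sets.Int) auto
      show "AE \<omega> in M. indicator B \<omega> * f \<omega> = indicator (B \<inter> D0) \<omega> + (\<Sum>j\<in>I. indicator (B \<inter> (E j \<inter> H j)) \<omega>)"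
        using AEf by (rule AE_mp) (rule AE_I2, simp add: f'_def indicator_inter_arith sum_distrib_left distrib_left)
    qed
    also have "\<dots> = measure M (B \<inter> D0) + (\<Sum>j\<in>I. measure M (B \<inter> (E j \<inter> H j)))"
      using Bev D0ev Eev Hev
      by (simp add: Bochner_Integration.integral_add Bochner_Integration.integral_sum ind_int sets.Int sets.Int_space_eq2)
    also have "\<dots> = measure M (B \<inter> D0) + (\<Sum>j\<in>I. measure M (B \<inter> E j) * w j)"
      using K3 by simp
    also have "\<dots> = (\<integral>\<omega>. indicator (B \<inter> D0) \<omega> + (\<Sum>j\<in>I. indicator (B \<inter> E j) \<omega> * w j) \<partial>M)"
      using Bev D0ev Eev
      by (simp add: Bochner_Integration.integral_add Bochner_Integration.integral_sum ind_int sets.Int sets.Int_space_eq2)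
    also have "\<dots> = (\<integral>\<omega>. indicator B \<omega> * g \<omega> \<partial>M)"
      by (rule Bochner_Integration.integral_cong) (simp_all add: g_def indicator_inter_arith sum_distrib_left distrib_left mult.assoc)
    also have "\<dots> = (\<integral>\<omega>\<in>B. g \<omega> \<partial>M)" by (simp add: set_lebesgue_integral_def)
    finally show "(\<integral>\<omega>\<in>B. f \<omega> \<partial>M) = (\<integral>\<omega>\<in>B. g \<omega> \<partial>M)" .
  qed
  then show ?thesis using AEg unfolding f_def by (rule AE_mp[OF _ AE_mp]) (rule AE_I2, auto)
qed

end


theorem proposition3:
  fixes M :: "'w measure" and S :: "'w \<Rightarrow> int \<Rightarrow> int"
    and eta :: "'w \<Rightarrow> int \<Rightarrow> 'v::real_normed_vector"
    and e :: "nat \<Rightarrow> 'v" and N :: nat and \<alpha> :: "nat \<Rightarrow> real"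
  assumes "prob_space M"
    and "N \<ge> 1" and "\<forall>i\<in>{1..N}. \<alpha> i > 0" and "(\<Sum>i=1..N. \<alpha> i) = 1"
    and "inj_on e {1..N}" and "\<forall>i\<in>{1..N}. norm (e i) = 1"
    and "\<forall>\<omega>\<in>space M. S \<omega> 0 = 0"
    and "prob_space.indep_vars M (\<lambda>_. count_space UNIV) (\<lambda>k \<omega>. S \<omega> (k + 1) - S \<omega> k) UNIV"
    and "\<forall>k. measure M {\<omega>\<in>space M. S \<omega> (k + 1) - S \<omega> k = 1} = 1/2
           \<and> measure M {\<omega>\<in>space M. S \<omega> (k + 1) - S \<omega> k = -1} = 1/2"
    and "prob_space.indep_vars M (\<lambda>_. count_space UNIV) (\<lambda>k \<omega>. eta \<omega> k) UNIV"
    and "\<forall>k. \<forall>i\<in>{1..N}. measure M {\<omega>\<in>space M. eta \<omega> k = e i} = \<alpha> i"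
    and "prob_space.indep_set M (sets (sigmaS M S)) (sets (sigmaS M eta))"
  shows
    "(\<forall>p n. p \<le> n \<longrightarrow>
        (AE \<omega> in M. norm (Psi e N (S \<omega>) (eta \<omega>) p n 0) = real_of_int (Splus (S \<omega>) p n)))
     \<and> (\<forall>p n q. p < n \<and> n < q \<longrightarrow>
        (AE \<omega> in M. minS (S \<omega>) p q = minS (S \<omega>) n q \<longrightarrow>
            edir e N (Psi e N (S \<omega>) (eta \<omega>) p q 0) = edir e N (Psi e N (S \<omega>) (eta \<omega>) n q 0)))
     \<and> (\<forall>p n q. p < n \<and> n < q \<longrightarrow>
        (AE \<omega> in M. minS (S \<omega>) p n = minS (S \<omega>) p q \<and> (\<forall>j\<in>{n..q}. Splus (S \<omega>) p j > 0) \<longrightarrow>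
            edir e N (Psi e N (S \<omega>) (eta \<omega>) p n 0) = edir e N (Psi e N (S \<omega>) (eta \<omega>) p q 0)))
     \<and> (\<forall>p n. \<forall>x\<in>GN e N. p \<le> n \<longrightarrow>
        (AE \<omega> in M. Psi e N (S \<omega>) (eta \<omega>) p n x =
            (if ereal (real_of_int n) \<le> hit_time (S \<omega>) p (norm x)
             then x + real_of_int (S \<omega> n - S \<omega> p) *\<^sub>R edir e N x
             else Psi e N (S \<omega>) (eta \<omega>) p n 0)))
     \<and> (\<forall>p n. \<forall>x\<in>GN e N. p \<le> n \<longrightarrow>
        (\<forall>A. AE \<omega> in M.
            real_cond_exp M (sigmaS M S) (\<lambda>\<omega>. indicator A (Psi e N (S \<omega>) (eta \<omega>) p n x)) \<omega>
              = measure_pmf.prob (Kker e N \<alpha> (S \<omega>) p n x) A)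
        \<and> (AE \<omega> in M. Kker e N \<alpha> (S \<omega>) p n x =
            (if ereal (real_of_int n) \<le> hit_time (S \<omega>) p (norm x)
             then return_pmf (x + real_of_int (S \<omega> n - S \<omega> p) *\<^sub>R edir e N x)
             else map_pmf (\<lambda>v. real_of_int (Splus (S \<omega>) p n) *\<^sub>R v) (alpha_pmf e N \<alpha>))))"
proof -
  have st_inst: "setting M S eta e N \<alpha>"
    unfolding setting_def setting_axioms_def using assms by auto
  interpret setting M S eta e N \<alpha> by (rule st_inst)
  have sa: "set_pmf (alpha_pmf e N \<alpha>) \<subseteq> e ` {1..N}" using alpha_facts(1)[OF apos asum] .
  have good: "AE \<omega> in M. stepw (S \<omega>) \<and> (\<forall>k. eta \<omega> k \<in> e ` {1..N})"
    using AE_step AE_eta by (rule AE_mp[OF _ AE_mp]) (rule AE_I2, auto)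
  have T1: "\<forall>p n. p \<le> n \<longrightarrow>
        (AE \<omega> in M. norm (Psi e N (S \<omega>) (eta \<omega>) p n 0) = real_of_int (Splus (S \<omega>) p n))"
  proof (intro allI impI)
    fix p n :: int assume pn: "p \<le> n"
    show "AE \<omega> in M. norm (Psi e N (S \<omega>) (eta \<omega>) p n 0) = real_of_int (Splus (S \<omega>) p n)"
      using good by (rule AE_mp) (rule AE_I2, use norm_Psi0 pn in blast)
  qed
  have T2: "\<forall>p n q. p < n \<and> n < q \<longrightarrow>
        (AE \<omega> in M. minS (S \<omega>) p q = minS (S \<omega>) n q \<longrightarrow>
            edir e N (Psi e N (S \<omega>) (eta \<omega>) p q 0) = edir e N (Psi e N (S \<omega>) (eta \<omega>) n q 0))"
  proof (intro allI impI)
    fix p n q :: int assume pnq: "p < n \<and> n < q"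
    show "AE \<omega> in M. minS (S \<omega>) p q = minS (S \<omega>) n q \<longrightarrow>
            edir e N (Psi e N (S \<omega>) (eta \<omega>) p q 0) = edir e N (Psi e N (S \<omega>) (eta \<omega>) n q 0)"
      using good by (rule AE_mp) (rule AE_I2, use pnq ii_a in blast)
  qed
  have T3: "\<forall>p n q. p < n \<and> n < q \<longrightarrow>
        (AE \<omega> in M. minS (S \<omega>) p n = minS (S \<omega>) p q \<and> (\<forall>j\<in>{n..q}. Splus (S \<omega>) p j > 0) \<longrightarrow>
            edir e N (Psi e N (S \<omega>) (eta \<omega>) p n 0) = edir e N (Psi e N (S \<omega>) (eta \<omega>) p q 0))"
  proof (intro allI impI)
    fix p n q :: int assume pnq: "p < n \<and> n < q"
    show "AE \<omega> in M. minS (S \<omega>) p n = minS (S \<omega>) p q \<and> (\<forall>j\<in>{n..q}. Splus (S \<omega>) p j > 0) \<longrightarrow>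
            edir e N (Psi e N (S \<omega>) (eta \<omega>) p n 0) = edir e N (Psi e N (S \<omega>) (eta \<omega>) p q 0)"
      using good by (rule AE_mp) (rule AE_I2, use pnq ii_b in blast)
  qed
  have T4: "\<forall>p n. \<forall>x\<in>GN e N. p \<le> n \<longrightarrow>
        (AE \<omega> in M. Psi e N (S \<omega>) (eta \<omega>) p n x =
            (if ereal (real_of_int n) \<le> hit_time (S \<omega>) p (norm x)
             then x + real_of_int (S \<omega> n - S \<omega> p) *\<^sub>R edir e N x
             else Psi e N (S \<omega>) (eta \<omega>) p n 0))"
  proof (intro allI impI ballI)
    fix p n :: int and x assume x: "x \<in> GN e N" and pn: "p \<le> n"
    show "AE \<omega> in M. Psi e N (S \<omega>) (eta \<omega>) p n x =
            (if ereal (real_of_int n) \<le> hit_time (S \<omega>) p (norm x)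
             then x + real_of_int (S \<omega> n - S \<omega> p) *\<^sub>R edir e N x
             else Psi e N (S \<omega>) (eta \<omega>) p n 0)"
      using good by (rule AE_mp) (rule AE_I2, use iii_path[OF _ _ sa x pn] in blast)
  qed
  have T5: "\<forall>p n. \<forall>x\<in>GN e N. p \<le> n \<longrightarrow>
        (\<forall>A. AE \<omega> in M.
            real_cond_exp M (sigmaS M S) (\<lambda>\<omega>. indicator A (Psi e N (S \<omega>) (eta \<omega>) p n x)) \<omega>
              = measure_pmf.prob (Kker e N \<alpha> (S \<omega>) p n x) A)
        \<and> (AE \<omega> in M. Kker e N \<alpha> (S \<omega>) p n x =
            (if ereal (real_of_int n) \<le> hit_time (S \<omega>) p (norm x)
             then return_pmf (x + real_of_int (S \<omega> n - S \<omega> p) *\<^sub>R edir e N x)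
             else map_pmf (\<lambda>v. real_of_int (Splus (S \<omega>) p n) *\<^sub>R v) (alpha_pmf e N \<alpha>)))"
  proof (intro allI impI ballI conjI)
    fix p n :: int and x and A assume x: "x \<in> GN e N" and pn: "p \<le> n"
    show "AE \<omega> in M.
            real_cond_exp M (sigmaS M S) (\<lambda>\<omega>. indicator A (Psi e N (S \<omega>) (eta \<omega>) p n x)) \<omega>
              = measure_pmf.prob (Kker e N \<alpha> (S \<omega>) p n x) A"
      by (rule iv_a[OF x pn])
  next
    fix p n :: int and x assume x: "x \<in> GN e N" and pn: "p \<le> n"
    show "AE \<omega> in M. Kker e N \<alpha> (S \<omega>) p n x =
            (if ereal (real_of_int n) \<le> hit_time (S \<omega>) p (norm x)
             then return_pmf (x + real_of_int (S \<omega> n - S \<omega> p) *\<^sub>R edir e N x)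
             else map_pmf (\<lambda>v. real_of_int (Splus (S \<omega>) p n) *\<^sub>R v) (alpha_pmf e N \<alpha>))"
      using good by (rule AE_mp) (rule AE_I2, use iii_path[OF _ _ sa x pn] in blast)
  qed
  show ?thesis using T1 T2 T3 T4 T5 by blast
qed

end
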